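(* The family $\mathcal{P}$ of pdCGs on the vertex set $V$, equipped with the twin order $\preceq_t$, is a complete distributive lattice. For $\mathcal{G},\mathcal{H}\in\mathcal{P}$ with quadruplet representations $\mathcal{G}=(V,E_{\mathcal{G}},\mathbb{L}_{\mathcal{G}},\mathbb{E}_{\mathcal{G}})$, $\mathcal{H}=(V,E_{\mathcal{H}},\mathbb{L}_{\mathcal{H}},\mathbb{E}_{\mathcal{H}})$: (i) the meet is $\mathcal{G}\wedge_t\mathcal{H}=(V,\,E_{\mathcal{G}}\cap E_{\mathcal{H}},\,\mathbb{L}_{\mathcal{G}}\cap\mathbb{L}_{\mathcal{H}},\,\mathbb{E}_{\mathcal{G}}\cap\mathbb{E}_{\mathcal{H}})$; (ii) the join is $\mathcal{G}\vee_t\mathcal{H}=(V,\,E_{\mathcal{G}}\cup E_{\mathcal{H}},\,\mathbb{L}_{\mathcal{G}}\cup\mathbb{L}_{\mathcal{H}},\,\mathbb{E}_{\mathcal{G}}\cup\mathbb{E}_{\mathcal{H}})$. Furthermore, the maximum element is $\hat 1=(V,F_V,L,F_L)$ (the complete graph with all colour classes atomic) and the minimum element is $\hat 0=(V,\emptyset,\emptyset,\emptyset)$ (the graph with no edges in which all vertices belong to twin-pairing classes).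
   Context: Let $V=\{1,\dots,p\}$ and let $\tau:V\to V$ be a twin-pairing function: $\tau(i)=j$ implies $\tau(j)=i$, and there is a partition $V=L\cup R$, $L\cap R=\emptyset$, with $\tau(L)=R$; vertices are numbered so that $L=\{1,\dots,q\}$, $R=\{q+1,\dots,p\}$. Let $F_V=\{(i,j)\mid i,j\in V,\ i<j\}$; extend $\tau$ to edges by $\tau(i,j)=(\tau(i),\tau(j))$ (endpoints reordered to lie in $F_V$) and to sets elementwise. Let $F_L=\{(i,j)\in F_V\mid i<\tau(j)\}$, $F_R=\{(i,j)\in F_V\mid i>\tau(j)\}$. A coloured graph is a pair $(\mathcal{V},\mathcal{E})$ with $\mathcal{V}$ a partition of $V$ and $\mathcal{E}$ a partition of an edge set $E\subseteq F_V$. A colour class is atomic if it has one element and twin-pairing if it is $\{i,\tau(i)\}$ or $\{(i,j),\tau(i,j)\}$ with $(i,j)\neq\tau(i,j)$. A pdCG is a coloured graph all of whose classes are atomic or twin-pairing; $\mathcal{P}$ is the set of pdCGs on $V$. Each pdCG $\mathcal{G}=(\mathcal{V},\mathcal{E})$ is identified with its quadruplet $(V,E_{\mathcal{G}},\mathbb{L}_{\mathcal{G}},\mathbb{E}_{\mathcal{G}})$, where $E_{\mathcal{G}}$ is its edge set, $\mathbb{L}_{\mathcal{G}}=\{i\in L\mid\{i\}\in\mathcal{V}\}$, and $\mathbb{E}_{\mathcal{G}}=\{(i,j)\in E_L\cap\tau(E_R)\mid\{(i,j)\}\in\mathcal{E}\}$ with $E_L=E_{\mathcal{G}}\cap F_L$,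 $E_R=E_{\mathcal{G}}\cap F_R$; this identification is a bijection between $\mathcal{P}$ and the quadruplets $(V,E,\mathbb{L},\mathbb{E})$ with $E\subseteq F_V$, $\mathbb{L}\subseteq L$, $\mathbb{E}\subseteq (E\cap F_L)\cap\tau(E\cap F_R)$. The twin order: $\mathcal{H}\preceq_t\mathcal{G}$ iff $E_{\mathcal{H}}\subseteq E_{\mathcal{G}}$, $\mathbb{L}_{\mathcal{H}}\subseteq\mathbb{L}_{\mathcal{G}}$ and $\mathbb{E}_{\mathcal{H}}\subseteq\mathbb{E}_{\mathcal{G}}$. *)

theory Defs
  imports "HOL-Library.Disjoint_Sets" "HOL-Algebra.Complete_Lattice"
begin

definition Vset :: "nat \<Rightarrow> nat set" where "Vset p = {1..p}"
definition Lset :: "nat \<Rightarrow> nat set" where "Lset q = {1..q}"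
definition Rset :: "nat \<Rightarrow> nat \<Rightarrow> nat set" where "Rset p q = {q+1..p}"

definition twin_pairing :: "nat \<Rightarrow> nat \<Rightarrow> (nat \<Rightarrow> nat) \<Rightarrow> bool" where
  "twin_pairing p q \<tau> \<longleftrightarrow>
     (\<forall>i\<in>Vset p. \<tau> i \<in> Vset p) \<and> (\<forall>i\<in>Vset p. \<tau> (\<tau> i) = i) \<and> \<tau> ` Lset q = Rset p q"

definition FV :: "nat \<Rightarrow> (nat \<times> nat) set" where
  "FV p = {(i,j). i \<in> Vset p \<and> j \<in> Vset p \<and> i < j}"

definition tau_edge :: "(nat \<Rightarrow> nat) \<Rightarrow> nat \<times> nat \<Rightarrow> nat \<times> nat" where
  "tau_edge \<tau> e = (min (\<tau> (fst e)) (\<tau> (snd e)), max (\<tau> (fst e)) (\<tau> (snd e)))"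

definition FL :: "nat \<Rightarrow> (nat \<Rightarrow> nat) \<Rightarrow> (nat \<times> nat) set" where
  "FL p \<tau> = {(i,j) \<in> FV p. i < \<tau> j}"

definition FR :: "nat \<Rightarrow> (nat \<Rightarrow> nat) \<Rightarrow> (nat \<times> nat) set" where
  "FR p \<tau> = {(i,j) \<in> FV p. i > \<tau> j}"

(* a coloured graph: (vertex partition, edge partition) *)
type_synonym cgraph = "nat set set \<times> (nat \<times> nat) set set"

definition atomic_class :: "'a set \<Rightarrow> bool" where
  "atomic_class C \<longleftrightarrow> (\<exists>x. C = {x})"

definition twin_vclass :: "(nat \<Rightarrow> nat) \<Rightarrow> nat set \<Rightarrow> bool" where
  "twin_vclass \<tau> C \<longleftrightarrow> (\<exists>i. C = {i, \<tau> i})"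

definition twin_eclass :: "(nat \<Rightarrow> nat) \<Rightarrow> (nat \<times> nat) set \<Rightarrow> bool" where
  "twin_eclass \<tau> C \<longleftrightarrow> (\<exists>e. C = {e, tau_edge \<tau> e} \<and> e \<noteq> tau_edge \<tau> e)"

definition coloured_graph :: "nat \<Rightarrow> cgraph \<Rightarrow> bool" where
  "coloured_graph p G \<longleftrightarrow>
     partition_on (Vset p) (fst G) \<and> (\<exists>E. E \<subseteq> FV p \<and> partition_on E (snd G))"

definition pdCGs :: "nat \<Rightarrow> (nat \<Rightarrow> nat) \<Rightarrow> cgraph set" where
  "pdCGs p \<tau> = {G. coloured_graph p G
      \<and> (\<forall>C\<in>fst G. atomic_class C \<or> twin_vclass \<tau> C)
      \<and> (\<forall>C\<in>snd G. atomic_class C \<or> twin_eclass \<tau> C)}"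

definition edges_of :: "cgraph \<Rightarrow> (nat \<times> nat) set" where
  "edges_of G = \<Union>(snd G)"

definition LL_of :: "nat \<Rightarrow> cgraph \<Rightarrow> nat set" where
  "LL_of q G = {i \<in> Lset q. {i} \<in> fst G}"

definition EE_of :: "nat \<Rightarrow> (nat \<Rightarrow> nat) \<Rightarrow> cgraph \<Rightarrow> (nat \<times> nat) set" where
  "EE_of p \<tau> G = {e \<in> (edges_of G \<inter> FL p \<tau>) \<inter> tau_edge \<tau> ` (edges_of G \<inter> FR p \<tau>).
                    {e} \<in> snd G}"

definition twin_le :: "nat \<Rightarrow> nat \<Rightarrow> (nat \<Rightarrow> nat) \<Rightarrow> cgraph \<Rightarrow> cgraph \<Rightarrow> bool" where
  "twin_le p q \<tau> H G \<longleftrightarrow>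
     edges_of H \<subseteq> edges_of G \<and> LL_of q H \<subseteq> LL_of q G \<and> EE_of p \<tau> H \<subseteq> EE_of p \<tau> G"

definition pdcg_order :: "nat \<Rightarrow> nat \<Rightarrow> (nat \<Rightarrow> nat) \<Rightarrow> cgraph gorder" where
  "pdcg_order p q \<tau> = \<lparr>carrier = pdCGs p \<tau>, eq = (=), le = twin_le p q \<tau>\<rparr>"

end

theory Submission
  imports Defs
begin


lemma part_cl:
  assumes a1: "\<And>x. x \<in> S \<Longrightarrow> x \<in> cl x"
      and a2: "\<And>x. x \<in> S \<Longrightarrow> cl x \<subseteq> S"
      and a3: "\<And>x y. x \<in> S \<Longrightarrow> y \<in> cl x \<Longrightarrow> cl y = cl x"
  shows "partition_on S (cl ` S)"
  unfolding partition_on_def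
proof (intro conjI)
  have "\<Union> (cl ` S) \<subseteq> S" using a2 by (simp add: UN_least)
  moreover have "S \<subseteq> \<Union> (cl ` S)"
  proof
    fix x assume "x \<in> S"
    then show "x \<in> \<Union> (cl ` S)" using a1[of x] by (intro UnionI[of "cl x"]) auto
  qed
  ultimately show "\<Union> (cl ` S) = S" by (rule antisym)
  show "{} \<notin> cl ` S"
  proof
    assume "{} \<in> cl ` S"
    then obtain x where "x \<in> S" "{} = cl x" by (rule imageE)
    then show False using a1[of x] by simp
  qed
  show "disjoint (cl ` S)"
  proof (rule disjointI)
    fix a b assume ab: "a \<in> cl ` S" "b \<in> cl ` S" "a \<noteq> b"
    obtain x where x: "x \<in> S" "a = cl x" using ab(1) by (rule imageE) simp
    obtain y where y: "y \<in> S" "b = cl y" using ab(2) by (rule imageE) simp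
    show "a \<inter> b = {}"
    proof (rule ccontr)
      assume "a \<inter> b \<noteq> {}"
      then obtain z where z: "z \<in> cl x" "z \<in> cl y" using x y by blast
      have "cl z = cl x" by (rule a3[OF x(1) z(1)])
      moreover have "cl z = cl y" by (rule a3[OF y(1) z(2)])
      ultimately show False using x y \<open>a \<noteq> b\<close> by simp
    qed
  qed
qed

definition pairlike :: "('a \<Rightarrow> 'a) \<Rightarrow> 'a set set \<Rightarrow> bool" where
  "pairlike \<sigma> P \<longleftrightarrow> (\<forall>C\<in>P. \<exists>x. C = {x} \<or> C = {x, \<sigma> x})"

lemma part_mem: "partition_on S P \<Longrightarrow> x \<in> S \<Longrightarrow> \<exists>C\<in>P. x \<in> C"
proof -
  assume P: "partition_on S P" and x: "x \<in> S"
  have "x \<in> \<Union>P" using partition_onD1[OF P] x by simp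
  then show ?thesis by (simp only: Union_iff)
qed

lemma part_uniq: "partition_on S P \<Longrightarrow> C \<in> P \<Longrightarrow> D \<in> P \<Longrightarrow> x \<in> C \<Longrightarrow> x \<in> D \<Longrightarrow> C = D"
  unfolding partition_on_def by (metis disjointD disjoint_iff)

lemma part_sub: "partition_on S P \<Longrightarrow> C \<in> P \<Longrightarrow> C \<subseteq> S"
  unfolding partition_on_def by (metis Union_upper)

lemma pl_nonsingle:
  assumes P: "partition_on S P" and pl: "pairlike \<sigma> P" and x: "x \<in> S" "{x} \<notin> P"
      and inv: "\<And>y. y \<in> S \<Longrightarrow> \<sigma> (\<sigma> y) = y"
  shows "\<sigma> x \<in> S \<and> \<sigma> x \<noteq> x \<and> {x, \<sigma> x} \<in> P"
proof -
  obtain C where C: "C \<in> P" "x \<in> C" using part_mem[OF P x(1)] by (elim bexE)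
  have "\<exists>z. C = {z} \<or> C = {z, \<sigma> z}" using pl C(1) unfolding pairlike_def by (rule bspec)
  then obtain z where z: "C = {z} \<or> C = {z, \<sigma> z}" by (elim exE)
  have CS: "C \<subseteq> S" using part_sub[OF P C(1)] .
  show ?thesis
  proof (cases "C = {z}")
    case True
    then have "C = {x}" using C(2) by simp
    then show ?thesis using C(1) x(2) by simp
  next
    case False
    then have Cz: "C = {z, \<sigma> z}" using z by simp
    have zS: "z \<in> S" "\<sigma> z \<in> S" using Cz CS by auto
    have xz: "x = z \<or> x = \<sigma> z" using Cz C(2) by simp
    have Cx: "C = {x, \<sigma> x}"
    proof (cases "x = z")
      case True then show ?thesis using Cz by simp
    next
      case False
      then have "x = \<sigma> z" using xz by simp
      then have "\<sigma> x = z" using inv[OF zS(1)] by simp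
      then show ?thesis using Cz \<open>x = \<sigma> z\<close> by (simp add: insert_commute)
    qed
    have "\<sigma> x \<noteq> x"
    proof
      assume "\<sigma> x = x"
      then have "C = {x}" using Cx by simp
      then show False using C(1) x(2) by simp
    qed
    moreover have "\<sigma> x \<in> S" using Cx CS by auto
    ultimately show ?thesis using Cx C(1) by simp
  qed
qed

lemma pl_flip:
  assumes P: "partition_on S P" and pl: "pairlike \<sigma> P" and x: "x \<in> S" "\<sigma> x \<in> S"
      and inv: "\<And>y. y \<in> S \<Longrightarrow> \<sigma> (\<sigma> y) = y"
  shows "{x} \<in> P \<longleftrightarrow> {\<sigma> x} \<in> P"
proof
  assume a: "{x} \<in> P"
  show "{\<sigma> x} \<in> P"
  proof (rule ccontr)
    assume "{\<sigma> x} \<notin> P"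
    from pl_nonsingle[OF P pl x(2) this inv] inv[OF x(1)]
    have b: "{\<sigma> x, x} \<in> P" "x \<noteq> \<sigma> x" by auto
    have "{x} = {\<sigma> x, x}" using part_uniq[OF P a b(1), of x] by simp
    then show False using b(2) by (metis insertI1 singletonD)
  qed
next
  assume a: "{\<sigma> x} \<in> P"
  show "{x} \<in> P"
  proof (rule ccontr)
    assume "{x} \<notin> P"
    from pl_nonsingle[OF P pl x(1) this inv]
    have b: "{x, \<sigma> x} \<in> P" "x \<noteq> \<sigma> x" by auto
    have "{\<sigma> x} = {x, \<sigma> x}" using part_uniq[OF P a b(1), of "\<sigma> x"] by simp
    then show False using b(2) by (metis insertI1 singletonD)
  qed
qed

lemma pl_eq_sub:
  assumes P: "partition_on S P" and P': "partition_on S P'" and pl: "pairlike \<sigma> P" and pl': "pairlike \<sigma> P'"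
      and inv: "\<And>y. y \<in> S \<Longrightarrow> \<sigma> (\<sigma> y) = y"
      and s: "\<And>x. x \<in> S \<Longrightarrow> {x} \<in> P \<longleftrightarrow> {x} \<in> P'"
  shows "P \<subseteq> P'"
proof
  fix C assume C: "C \<in> P"
  have "\<exists>z. C = {z} \<or> C = {z, \<sigma> z}" using pl C unfolding pairlike_def by (rule bspec)
  then obtain z where z: "C = {z} \<or> C = {z, \<sigma> z}" by (elim exE)
  have zS: "z \<in> S" using z part_sub[OF P C] by auto
  show "C \<in> P'"
  proof (cases "{z} \<in> P")
    case True
    then have "C = {z}" using part_uniq[OF P C True, of z] z by auto
    then show ?thesis using s[OF zS] True by simp
  next
    case False
    then have "{z} \<notin> P'" using s[OF zS] by simp
    from pl_nonsingle[OF P' pl' zS this inv] have "{z, \<sigma> z} \<in> P'" by simp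
    moreover have "C = {z, \<sigma> z}" using z False C by auto
    ultimately show ?thesis by simp
  qed
qed

lemma pl_eq:
  assumes P: "partition_on S P" and P': "partition_on S P'" and pl: "pairlike \<sigma> P" and pl': "pairlike \<sigma> P'"
      and inv: "\<And>y. y \<in> S \<Longrightarrow> \<sigma> (\<sigma> y) = y"
      and s: "\<And>x. x \<in> S \<Longrightarrow> {x} \<in> P \<longleftrightarrow> {x} \<in> P'"
  shows "P = P'"
proof (rule antisym)
  show "P \<subseteq> P'" by (rule pl_eq_sub[OF P P' pl pl' inv s])
  show "P' \<subseteq> P" by (rule pl_eq_sub[OF P' P pl' pl], erule inv, erule s[symmetric])
qed


locale tp =
  fixes p q :: nat and \<tau> :: "nat \<Rightarrow> nat"
  assumes tw: "twin_pairing p q \<tau>"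
begin

lemma tV: "i \<in> Vset p \<Longrightarrow> \<tau> i \<in> Vset p" using tw unfolding twin_pairing_def by blast
lemma tt: "i \<in> Vset p \<Longrightarrow> \<tau> (\<tau> i) = i" using tw unfolding twin_pairing_def by blast
lemma tL: "i \<in> Lset q \<Longrightarrow> \<tau> i \<in> Rset p q" using tw unfolding twin_pairing_def by blast
lemma LV: "Lset q \<subseteq> Vset p"
proof (cases "q = 0")
  case True then show ?thesis by (simp add: Lset_def)
next
  case False
  then have "1 \<in> Lset q" by (simp add: Lset_def)
  then have "\<tau> 1 \<in> Rset p q" by (rule tL)
  then have "q \<le> p" by (simp add: Rset_def)
  then show ?thesis by (auto simp: Lset_def Vset_def)
qed
lemma RV: "Rset p q \<subseteq> Vset p" by (auto simp: Rset_def Vset_def)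
lemma LR: "Lset q \<inter> Rset p q = {}" by (auto simp: Rset_def Lset_def)
lemma VLR: "i \<in> Vset p \<Longrightarrow> i \<in> Lset q \<or> i \<in> Rset p q" by (auto simp: Rset_def Lset_def Vset_def)
lemma tR: "i \<in> Rset p q \<Longrightarrow> \<tau> i \<in> Lset q"
proof -
  assume "i \<in> Rset p q"
  then obtain j where "j \<in> Lset q" "i = \<tau> j" using tw unfolding twin_pairing_def by (metis imageE)
  then show ?thesis using tt LV by auto
qed
lemma tne: "i \<in> Vset p \<Longrightarrow> \<tau> i \<noteq> i" using VLR tL tR LR by fastforce
lemma tinj: "i \<in> Vset p \<Longrightarrow> j \<in> Vset p \<Longrightarrow> \<tau> i = \<tau> j \<Longrightarrow> i = j" by (metis tt)
lemma Lle: "i \<in> Lset q \<Longrightarrow> j \<in> Rset p q \<Longrightarrow> i < j" by (auto simp: Rset_def Lset_def)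

abbreviation te where "te \<equiv> tau_edge \<tau>"

lemma teFV: "e \<in> FV p \<Longrightarrow> te e \<in> FV p \<and> te (te e) = e"
proof -
  assume e: "e \<in> FV p"
  obtain i j where ij: "e = (i,j)" "i \<in> Vset p" "j \<in> Vset p" "i < j" using e by (auto simp: FV_def)
  have ne: "\<tau> i \<noteq> \<tau> j"
  proof
    assume "\<tau> i = \<tau> j"
    then have "i = j" by (rule tinj[OF ij(2) ij(3)])
    then show False using ij(4) by simp
  qed
  have V: "\<tau> i \<in> Vset p" "\<tau> j \<in> Vset p" using tV ij by auto
  have tt2: "\<tau> (\<tau> i) = i" "\<tau> (\<tau> j) = j" using tt ij by auto
  show ?thesis
  proof (cases "\<tau> i < \<tau> j")
    case True
    then have "te e = (\<tau> i, \<tau> j)" using ij(1) by (simp add: tau_edge_def)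
    moreover have "te (\<tau> i, \<tau> j) = e" using ij tt2 by (simp add: tau_edge_def)
    ultimately show ?thesis using V True by (simp add: FV_def)
  next
    case False
    then have lt: "\<tau> j < \<tau> i" using ne by simp
    then have "te e = (\<tau> j, \<tau> i)" using ij(1) by (simp add: tau_edge_def)
    moreover have "te (\<tau> j, \<tau> i) = e" using ij tt2 by (simp add: tau_edge_def)
    ultimately show ?thesis using V lt by (simp add: FV_def)
  qed
qed

lemma FLV: "FL p \<tau> \<subseteq> FV p" and FRV: "FR p \<tau> \<subseteq> FV p" and FLR: "FL p \<tau> \<inter> FR p \<tau> = {}"
  by (auto simp: FL_def FR_def)

lemma FLR_iff: "e \<in> FV p \<Longrightarrow> e \<in> FL p \<tau> \<longleftrightarrow> te e \<in> FR p \<tau>"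
proof -
  assume e: "e \<in> FV p"
  obtain i j where ij: "e = (i,j)" "i \<in> Vset p" "j \<in> Vset p" "i < j" using e by (auto simp: FV_def)
  have tfv: "te e \<in> FV p" using teFV e by auto
  have ti: "\<tau> (\<tau> i) = i" "\<tau> (\<tau> j) = j" using tt ij by auto
  have "i \<in> Lset q \<or> i \<in> Rset p q" "j \<in> Lset q \<or> j \<in> Rset p q" using VLR ij by auto
  then consider "i \<in> Lset q" "j \<in> Lset q" | "i \<in> Lset q" "j \<in> Rset p q" | "i \<in> Rset p q" "j \<in> Lset q"
    | "i \<in> Rset p q" "j \<in> Rset p q" by blast
  then show ?thesis
  proof cases
    case 1
    then have a: "\<tau> i \<in> Rset p q" "\<tau> j \<in> Rset p q" using tL by auto
    have "i < \<tau> j" using Lle 1 a by auto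
    moreover have "min (\<tau> i) (\<tau> j) > \<tau> (max (\<tau> i) (\<tau> j))"
      using Lle a tR 1 ti by (auto simp: min_def max_def)
    ultimately show ?thesis using ij tfv e e by (auto simp: FL_def FR_def tau_edge_def)
  next
    case 2
    then have a: "\<tau> i \<in> Rset p q" "\<tau> j \<in> Lset q" using tL tR by auto
    have "\<tau> j < \<tau> i" using Lle a by auto
    then show ?thesis using ij tfv e ti by (auto simp: FL_def FR_def tau_edge_def min_def max_def)
  next
    case 3
    then show ?thesis using Lle ij by fastforce
  next
    case 4
    then have a: "\<tau> i \<in> Lset q" "\<tau> j \<in> Lset q" using tR by auto
    have "\<not> i < \<tau> j" using Lle 4 a by fastforce
    moreover have "\<not> min (\<tau> i) (\<tau> j) > \<tau> (max (\<tau> i) (\<tau> j))"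
    proof -
      have m: "min (\<tau> i) (\<tau> j) \<in> Lset q" using a by (simp add: min_def)
      have "\<tau> (max (\<tau> i) (\<tau> j)) \<in> Rset p q" using ti 4 by (simp add: max_def)
      then show ?thesis using Lle[OF m] by fastforce
    qed
    ultimately show ?thesis using ij tfv e by (auto simp: FL_def FR_def tau_edge_def)
  qed
qed

lemma FL_ne: "e \<in> FL p \<tau> \<Longrightarrow> te e \<noteq> e"
  using FLR_iff FLV FLR by fastforce

lemma fix_or: "e \<in> FV p \<Longrightarrow> te e \<noteq> e \<Longrightarrow> e \<in> FL p \<tau> \<or> e \<in> FR p \<tau>"
proof -
  assume e: "e \<in> FV p" "te e \<noteq> e"
  obtain i j where ij: "e = (i,j)" "i \<in> Vset p" "j \<in> Vset p" "i < j" using e by (auto simp: FV_def)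
  show ?thesis
  proof (rule ccontr)
    assume "\<not> ?thesis"
    then have "i = \<tau> j" using ij e by (auto simp: FL_def FR_def)
    then have "te e = e" using ij tt by (auto simp: tau_edge_def min_def max_def)
    then show False using e by simp
  qed
qed

end


context tp begin

definition vcl :: "nat set \<Rightarrow> nat \<Rightarrow> nat set" where
  "vcl LL i = (if i \<in> LL \<or> \<tau> i \<in> LL then {i} else {i, \<tau> i})"

definition ecl :: "(nat \<times> nat) set \<Rightarrow> (nat \<times> nat) set \<Rightarrow> nat \<times> nat \<Rightarrow> (nat \<times> nat) set" where
  "ecl E EE e = (if te e = e \<or> te e \<notin> E \<or> e \<in> EE \<or> te e \<in> EE then {e} else {e, te e})"

definition dec :: "(nat \<times> nat) set \<Rightarrow> nat set \<Rightarrow> (nat \<times> nat) set \<Rightarrow> cgraph" where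
  "dec E LL EE = (vcl LL ` Vset p, ecl E EE ` E)"

definition valid :: "(nat \<times> nat) set \<Rightarrow> nat set \<Rightarrow> (nat \<times> nat) set \<Rightarrow> bool" where
  "valid E LL EE \<longleftrightarrow> E \<subseteq> FV p \<and> LL \<subseteq> Lset q \<and> EE \<subseteq> E \<inter> FL p \<tau> \<inter> te ` (E \<inter> FR p \<tau>)"

lemma vpart: "partition_on (Vset p) (vcl LL ` Vset p)"
proof (rule part_cl)
  fix x assume x: "x \<in> Vset p"
  show "x \<in> vcl LL x" by (simp add: vcl_def)
  show "vcl LL x \<subseteq> Vset p" using x tV[OF x] by (simp add: vcl_def)
  fix y assume y: "y \<in> vcl LL x"
  show "vcl LL y = vcl LL x"
  proof (cases "x \<in> LL \<or> \<tau> x \<in> LL")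
    case True then show ?thesis using y by (simp add: vcl_def)
  next
    case False
    then have "y = x \<or> y = \<tau> x" using y by (simp add: vcl_def)
    then show ?thesis
    proof
      assume "y = x" then show ?thesis by simp
    next
      assume yx: "y = \<tau> x"
      have "\<tau> y = x" using yx tt[OF x] by simp
      then show ?thesis using False yx by (auto simp: vcl_def)
    qed
  qed
qed

lemma epart: assumes "E \<subseteq> FV p" shows "partition_on E (ecl E EE ` E)"
proof (rule part_cl)
  fix x assume x: "x \<in> E"
  show "x \<in> ecl E EE x" by (simp add: ecl_def)
  show "ecl E EE x \<subseteq> E" using x by (simp add: ecl_def)
  fix y assume y: "y \<in> ecl E EE x"
  show "ecl E EE y = ecl E EE x"
  proof (cases "te x = x \<or> te x \<notin> E \<or> x \<in> EE \<or> te x \<in> EE")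
    case True then show ?thesis using y by (simp add: ecl_def)
  next
    case False
    then have "y = x \<or> y = te x" using y by (simp add: ecl_def)
    then show ?thesis
    proof
      assume "y = x" then show ?thesis by simp
    next
      assume yx: "y = te x"
      have xF: "x \<in> FV p" using x assms by blast
      have "te y = x" using yx teFV[OF xF] by simp
      then show ?thesis using False yx x by (auto simp: ecl_def)
    qed
  qed
qed

lemma dec_in: assumes v: "valid E LL EE" shows "dec E LL EE \<in> pdCGs p \<tau>"
proof -
  have EF: "E \<subseteq> FV p" using v by (simp add: valid_def)
  have cg: "coloured_graph p (dec E LL EE)"
    unfolding coloured_graph_def dec_def using vpart epart[OF EF] EF by auto
  have vc: "\<forall>C\<in>fst (dec E LL EE). atomic_class C \<or> twin_vclass \<tau> C"
    by (auto simp: dec_def vcl_def atomic_class_def twin_vclass_def)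
  have ec1: "atomic_class (ecl E EE e) \<or> twin_eclass \<tau> (ecl E EE e)" for e
  proof (cases "te e = e \<or> te e \<notin> E \<or> e \<in> EE \<or> te e \<in> EE")
    case True then show ?thesis by (simp add: ecl_def atomic_class_def)
  next
    case False
    then have "ecl E EE e = {e, te e}" "e \<noteq> te e" by (auto simp: ecl_def)
    then have "twin_eclass \<tau> (ecl E EE e)" unfolding twin_eclass_def by (intro exI[of _ e]) simp
    then show ?thesis by simp
  qed
  have ec: "\<forall>C\<in>snd (dec E LL EE). atomic_class C \<or> twin_eclass \<tau> C"
    using ec1 by (simp add: dec_def)
  show ?thesis using cg vc ec by (simp add: pdCGs_def)
qed

lemma dec_edges: assumes v: "valid E LL EE" shows "edges_of (dec E LL EE) = E"
proof -
  have EF: "E \<subseteq> FV p" using v by (simp add: valid_def)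
  show ?thesis using partition_onD1[OF epart[OF EF]] by (simp add: edges_of_def dec_def)
qed

lemma dec_LL: assumes v: "valid E LL EE" shows "LL_of q (dec E LL EE) = LL"
proof -
  have LLL: "LL \<subseteq> Lset q" using v by (simp add: valid_def)
  have "i \<in> Lset q \<Longrightarrow> {i} \<in> vcl LL ` Vset p \<longleftrightarrow> i \<in> LL" for i
  proof
    assume i: "i \<in> Lset q" and im: "{i} \<in> vcl LL ` Vset p"
    from im obtain j where j: "j \<in> Vset p" "{i} = vcl LL j" by auto
    have tiR: "\<tau> i \<notin> LL" using tL[OF i] LR LLL by blast
    show "i \<in> LL"
    proof (cases "j \<in> LL \<or> \<tau> j \<in> LL")
      case True
      then have "i = j" using j by (simp add: vcl_def)
      then show ?thesis using True tiR by simp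
    next
      case False
      then have "j = i" "\<tau> j = i" using j by (auto simp: vcl_def)
      then have "\<tau> j = j" by simp
      then show ?thesis using tne[OF j(1)] by simp
    qed
  next
    assume i: "i \<in> Lset q" and "i \<in> LL"
    then have "vcl LL i = {i}" by (simp add: vcl_def)
    moreover have "i \<in> Vset p" using i LV by blast
    ultimately show "{i} \<in> vcl LL ` Vset p" by (metis imageI)
  qed
  then show ?thesis using LLL by (auto simp: LL_of_def dec_def)
qed

lemma dec_EE: assumes v: "valid E LL EE" shows "EE_of p \<tau> (dec E LL EE) = EE"
proof -
  have EF: "E \<subseteq> FV p" and EEs: "EE \<subseteq> E \<inter> FL p \<tau> \<inter> te ` (E \<inter> FR p \<tau>)" using v by (simp_all add: valid_def)
  have key: "e \<in> E \<inter> FL p \<tau> \<inter> te ` (E \<inter> FR p \<tau>) \<Longrightarrow> {e} \<in> ecl E EE ` E \<longleftrightarrow> e \<in> EE" for e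
  proof -
    assume e: "e \<in> E \<inter> FL p \<tau> \<inter> te ` (E \<inter> FR p \<tau>)"
    then obtain g where g: "g \<in> E" "g \<in> FR p \<tau>" "e = te g" by blast
    have eFV: "e \<in> FV p" using e EF by blast
    have gF: "g \<in> FV p" using g(1) EF by blast
    have tee: "te e = g" using g(3) teFV[OF gF] by simp
    have ne: "te e \<noteq> e" using FL_ne e by blast
    have teEE: "te e \<notin> EE" using tee g(2) EEs FLR by blast
    show ?thesis
    proof
      assume im: "{e} \<in> ecl E EE ` E"
      from im obtain f where f: "f \<in> E" "{e} = ecl E EE f" by auto
      show "e \<in> EE"
      proof (cases "te f = f \<or> te f \<notin> E \<or> f \<in> EE \<or> te f \<in> EE")
        case True
        then have "e = f" using f by (simp add: ecl_def)
        then show ?thesis using True ne tee g teEE by auto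
      next
        case False
        then have "f = e" "te f = e" using f by (auto simp: ecl_def)
        then have "te f = f" by simp
        then show ?thesis using False by simp
      qed
    next
      assume "e \<in> EE"
      then have "ecl E EE e = {e}" by (simp add: ecl_def)
      then show "{e} \<in> ecl E EE ` E" using e by (metis IntD1 imageI)
    qed
  qed
  have ed: "edges_of (dec E LL EE) = E" by (rule dec_edges[OF v])
  have sd: "snd (dec E LL EE) = ecl E EE ` E" by (simp add: dec_def)
  show ?thesis
  proof (rule Set.set_eqI)
    fix e
    show "e \<in> EE_of p \<tau> (dec E LL EE) \<longleftrightarrow> e \<in> EE"
    proof
      assume "e \<in> EE_of p \<tau> (dec E LL EE)"
      then have "e \<in> E \<inter> FL p \<tau> \<inter> te ` (E \<inter> FR p \<tau>)" "{e} \<in> ecl E EE ` E"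
        unfolding EE_of_def ed sd by auto
      then show "e \<in> EE" using key by blast
    next
      assume e: "e \<in> EE"
      then have "e \<in> E \<inter> FL p \<tau> \<inter> te ` (E \<inter> FR p \<tau>)" using EEs by blast
      moreover then have "{e} \<in> ecl E EE ` E" using key e by blast
      ultimately show "e \<in> EE_of p \<tau> (dec E LL EE)" unfolding EE_of_def ed sd by simp
    qed
  qed
qed


lemma pd_props:
  assumes G: "G \<in> pdCGs p \<tau>"
  shows "partition_on (Vset p) (fst G)" "partition_on (edges_of G) (snd G)"
    "pairlike \<tau> (fst G)" "pairlike te (snd G)" "edges_of G \<subseteq> FV p"
proof -
  have cg: "coloured_graph p G" and vc: "\<forall>C\<in>fst G. atomic_class C \<or> twin_vclass \<tau> C"
    and ec: "\<forall>C\<in>snd G. atomic_class C \<or> twin_eclass \<tau> C" using G by (simp_all add: pdCGs_def)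
  show "partition_on (Vset p) (fst G)" using cg by (simp add: coloured_graph_def)
  obtain E where E: "E \<subseteq> FV p" "partition_on E (snd G)" using cg by (auto simp: coloured_graph_def)
  have "edges_of G = E" using partition_onD1[OF E(2)] by (simp add: edges_of_def)
  then show "partition_on (edges_of G) (snd G)" "edges_of G \<subseteq> FV p" using E by simp_all
  show "pairlike \<tau> (fst G)" unfolding pairlike_def
  proof
    fix C assume "C \<in> fst G"
    then have "atomic_class C \<or> twin_vclass \<tau> C" using vc by blast
    then show "\<exists>x. C = {x} \<or> C = {x, \<tau> x}" unfolding atomic_class_def twin_vclass_def by blast
  qed
  show "pairlike te (snd G)" unfolding pairlike_def
  proof
    fix C assume "C \<in> snd G"
    then have "atomic_class C \<or> twin_eclass \<tau> C" using ec by blast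
    then show "\<exists>x. C = {x} \<or> C = {x, te x}" unfolding atomic_class_def twin_eclass_def by blast
  qed
qed

lemma pd_valid: assumes G: "G \<in> pdCGs p \<tau>" shows "valid (edges_of G) (LL_of q G) (EE_of p \<tau> G)"
  using pd_props(5)[OF G] unfolding valid_def LL_of_def EE_of_def by blast

lemma EE_char:
  assumes G: "G \<in> pdCGs p \<tau>" and f: "f \<in> edges_of G" "f \<in> FL p \<tau>" "te f \<in> edges_of G"
  shows "{f} \<in> snd G \<longleftrightarrow> f \<in> EE_of p \<tau> G"
proof -
  have fF: "f \<in> FV p" using f(2) FLV by blast
  have "te f \<in> FR p \<tau>" using FLR_iff[OF fF] f(2) by simp
  moreover have "f = te (te f)" using teFV[OF fF] by simp
  ultimately have "f \<in> te ` (edges_of G \<inter> FR p \<tau>)" using f(3) by blast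
  then show ?thesis using f unfolding EE_of_def by blast
qed

lemma enc_inj:
  assumes G: "G \<in> pdCGs p \<tau>" and H: "H \<in> pdCGs p \<tau>"
    and e1: "edges_of G = edges_of H" and e2: "LL_of q G = LL_of q H" and e3: "EE_of p \<tau> G = EE_of p \<tau> H"
  shows "G = H"
proof -
  note PG = pd_props[OF G] and PH = pd_props[OF H]
  have invV: "\<And>y. y \<in> Vset p \<Longrightarrow> \<tau> (\<tau> y) = y" by (rule tt)
  have sV: "{i} \<in> fst G \<longleftrightarrow> {i} \<in> fst H" if i: "i \<in> Vset p" for i
  proof -
    have L: "{j} \<in> fst G \<longleftrightarrow> {j} \<in> fst H" if j: "j \<in> Lset q" for j
    proof -
      have "{j} \<in> fst G \<longleftrightarrow> j \<in> LL_of q G" using j by (simp add: LL_of_def)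
      also have "\<dots> \<longleftrightarrow> j \<in> LL_of q H" using e2 by simp
      also have "\<dots> \<longleftrightarrow> {j} \<in> fst H" using j by (simp add: LL_of_def)
      finally show ?thesis .
    qed
    show ?thesis
    proof (cases "i \<in> Lset q")
      case True then show ?thesis using L by simp
    next
      case False
      then have iR: "i \<in> Rset p q" using VLR[OF i] by simp
      have j: "\<tau> i \<in> Lset q" using tR[OF iR] .
      have jV: "\<tau> i \<in> Vset p" using tV[OF i] .
      have "{i} \<in> fst G \<longleftrightarrow> {\<tau> i} \<in> fst G" using pl_flip[OF PG(1) PG(3) i jV invV] .
      also have "\<dots> \<longleftrightarrow> {\<tau> i} \<in> fst H" using L[OF j] .
      also have "\<dots> \<longleftrightarrow> {i} \<in> fst H" using pl_flip[OF PH(1) PH(3) i jV invV] by simp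
      finally show ?thesis .
    qed
  qed
  have fst_eq: "fst G = fst H" by (rule pl_eq[OF PG(1) PH(1) PG(3) PH(3) invV sV])
  define E where "E = edges_of G"
  have PGE: "partition_on E (snd G)" using PG(2) E_def by simp
  have PHE: "partition_on E (snd H)" using PH(2) E_def e1 by simp
  have EF: "E \<subseteq> FV p" using PG(5) E_def by simp
  have invE: "\<And>y. y \<in> E \<Longrightarrow> te (te y) = y" using teFV EF by blast
  have FLc: "{f} \<in> snd G \<longleftrightarrow> {f} \<in> snd H" if f: "f \<in> E" "f \<in> FL p \<tau>" "te f \<in> E" for f
  proof -
    have "{f} \<in> snd G \<longleftrightarrow> f \<in> EE_of p \<tau> G" using EE_char[OF G] f E_def by simp
    also have "\<dots> \<longleftrightarrow> f \<in> EE_of p \<tau> H" using e3 by simp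
    also have "\<dots> \<longleftrightarrow> {f} \<in> snd H" using EE_char[OF H] f E_def e1 by simp
    finally show ?thesis .
  qed
  have sE: "{e} \<in> snd G \<longleftrightarrow> {e} \<in> snd H" if e: "e \<in> E" for e
  proof (cases "te e \<in> E \<and> te e \<noteq> e")
    case False
    have "{e} \<in> snd G"
    proof (rule ccontr)
      assume "{e} \<notin> snd G"
      from pl_nonsingle[OF PGE PG(4) e this invE] False show False by simp
    qed
    moreover have "{e} \<in> snd H"
    proof (rule ccontr)
      assume "{e} \<notin> snd H"
      from pl_nonsingle[OF PHE PH(4) e this invE] False show False by simp
    qed
    ultimately show ?thesis by simp
  next
    case True
    have eF: "e \<in> FV p" using e EF by blast
    have "e \<in> FL p \<tau> \<or> e \<in> FR p \<tau>" using fix_or[OF eF] True by simp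
    then show ?thesis
    proof
      assume "e \<in> FL p \<tau>" then show ?thesis using FLc e True by simp
    next
      assume eR: "e \<in> FR p \<tau>"
      have tF: "te e \<in> FV p" using teFV[OF eF] by simp
      have tte: "te (te e) = e" using teFV[OF eF] by simp
      have "te e \<in> FL p \<tau>" using FLR_iff[OF tF] tte eR by simp
      then have c: "{te e} \<in> snd G \<longleftrightarrow> {te e} \<in> snd H" using FLc[of "te e"] True tte e by simp
      have "{e} \<in> snd G \<longleftrightarrow> {te e} \<in> snd G" using pl_flip[OF PGE PG(4) e _ invE] True by simp
      also have "\<dots> \<longleftrightarrow> {te e} \<in> snd H" using c .
      also have "\<dots> \<longleftrightarrow> {e} \<in> snd H" using pl_flip[OF PHE PH(4) e _ invE] True by simp
      finally show ?thesis .
    qed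
  qed
  have snd_eq: "snd G = snd H" by (rule pl_eq[OF PGE PHE PG(4) PH(4) invE sE])
  show ?thesis using fst_eq snd_eq by (simp add: prod_eq_iff)
qed


abbreviation PO where "PO \<equiv> pdcg_order p q \<tau>"

lemma PO_simps [simp]: "carrier PO = pdCGs p \<tau>" "le PO = twin_le p q \<tau>" "eq PO = (=)"
  by (simp_all add: pdcg_order_def)

lemma tl_antisym:
  assumes "G \<in> pdCGs p \<tau>" "H \<in> pdCGs p \<tau>" "twin_le p q \<tau> G H" "twin_le p q \<tau> H G"
  shows "G = H"
  using assms(3,4) by (intro enc_inj[OF assms(1,2)]) (auto simp: twin_le_def)

lemma po: "partial_order PO"
proof (unfold_locales)
  fix x y z
  show "x .=\<^bsub>PO\<^esub> x" by simp
  show "x .=\<^bsub>PO\<^esub> y \<Longrightarrow> y .=\<^bsub>PO\<^esub> x" by simp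
  show "x .=\<^bsub>PO\<^esub> y \<Longrightarrow> y .=\<^bsub>PO\<^esub> z \<Longrightarrow> x .=\<^bsub>PO\<^esub> z" by simp
  show "x \<sqsubseteq>\<^bsub>PO\<^esub> x" by (simp add: twin_le_def)
  show "x \<sqsubseteq>\<^bsub>PO\<^esub> y \<Longrightarrow> y \<sqsubseteq>\<^bsub>PO\<^esub> x \<Longrightarrow> x \<in> carrier PO \<Longrightarrow> y \<in> carrier PO \<Longrightarrow> x .=\<^bsub>PO\<^esub> y"
    using tl_antisym by simp
  show "x \<sqsubseteq>\<^bsub>PO\<^esub> y \<Longrightarrow> y \<sqsubseteq>\<^bsub>PO\<^esub> z \<Longrightarrow> x \<in> carrier PO \<Longrightarrow> y \<in> carrier PO \<Longrightarrow> z \<in> carrier PO \<Longrightarrow> x \<sqsubseteq>\<^bsub>PO\<^esub> z"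
    by (auto simp: twin_le_def)
  fix w
  show "x .=\<^bsub>PO\<^esub> y \<Longrightarrow> z .=\<^bsub>PO\<^esub> w \<Longrightarrow> x \<in> carrier PO \<Longrightarrow> y \<in> carrier PO \<Longrightarrow> z \<in> carrier PO \<Longrightarrow> w \<in> carrier PO \<Longrightarrow> (x \<sqsubseteq>\<^bsub>PO\<^esub> z) = (y \<sqsubseteq>\<^bsub>PO\<^esub> w)"
    by simp
next
  show "(.=\<^bsub>PO\<^esub>) = (=)" by simp
qed

definition sE where "sE A = (\<Union>G\<in>A. edges_of G)"
definition sL where "sL A = (\<Union>G\<in>A. LL_of q G)"
definition sEE where "sEE A = (\<Union>G\<in>A. EE_of p \<tau> G)"
definition iE where "iE A = FV p \<inter> (\<Inter>G\<in>A. edges_of G)"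
definition iL where "iL A = Lset q \<inter> (\<Inter>G\<in>A. LL_of q G)"
definition iEE where "iEE A = FL p \<tau> \<inter> (\<Inter>G\<in>A. EE_of p \<tau> G)"

lemma s_valid: assumes A: "A \<subseteq> pdCGs p \<tau>" shows "valid (sE A) (sL A) (sEE A)"
  unfolding valid_def
proof (intro conjI)
  have v: "valid (edges_of G) (LL_of q G) (EE_of p \<tau> G)" if "G \<in> A" for G using pd_valid A that by blast
  show "sE A \<subseteq> FV p" using v unfolding sE_def valid_def by blast
  show "sL A \<subseteq> Lset q" using v unfolding sL_def valid_def by blast
  show "sEE A \<subseteq> sE A \<inter> FL p \<tau> \<inter> te ` (sE A \<inter> FR p \<tau>)"
  proof
    fix e assume "e \<in> sEE A"
    then obtain G where G: "G \<in> A" "e \<in> EE_of p \<tau> G" unfolding sEE_def by blast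
    then have "e \<in> edges_of G \<inter> FL p \<tau> \<inter> te ` (edges_of G \<inter> FR p \<tau>)" using v[OF G(1)] unfolding valid_def by blast
    moreover have "edges_of G \<subseteq> sE A" using G(1) unfolding sE_def by blast
    ultimately show "e \<in> sE A \<inter> FL p \<tau> \<inter> te ` (sE A \<inter> FR p \<tau>)" by blast
  qed
qed

lemma i_valid: assumes A: "A \<subseteq> pdCGs p \<tau>" shows "valid (iE A) (iL A) (iEE A)"
  unfolding valid_def
proof (intro conjI)
  have v: "valid (edges_of G) (LL_of q G) (EE_of p \<tau> G)" if "G \<in> A" for G using pd_valid A that by blast
  show "iE A \<subseteq> FV p" unfolding iE_def by blast
  show "iL A \<subseteq> Lset q" unfolding iL_def by blast
  show "iEE A \<subseteq> iE A \<inter> FL p \<tau> \<inter> te ` (iE A \<inter> FR p \<tau>)"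
  proof
    fix e assume e: "e \<in> iEE A"
    then have eL: "e \<in> FL p \<tau>" unfolding iEE_def by blast
    have eF: "e \<in> FV p" using eL FLV by blast
    have tF: "te e \<in> FV p" and tte: "te (te e) = e" using teFV[OF eF] by simp_all
    have tR: "te e \<in> FR p \<tau>" using FLR_iff[OF eF] eL by simp
    have inG: "e \<in> edges_of G \<and> te e \<in> edges_of G" if G: "G \<in> A" for G
    proof -
      have "e \<in> EE_of p \<tau> G" using e G unfolding iEE_def by blast
      then have "e \<in> edges_of G" "e \<in> te ` (edges_of G \<inter> FR p \<tau>)" using v[OF G] unfolding valid_def by blast+
      moreover then obtain g where g: "g \<in> edges_of G" "e = te g" by blast
      moreover have "g \<in> FV p" using g(1) v[OF G] unfolding valid_def by blast
      ultimately show ?thesis using teFV by auto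
    qed
    have "e \<in> iE A" "te e \<in> iE A" using inG eF tF unfolding iE_def by blast+
    then have "te e \<in> iE A \<inter> FR p \<tau>" using tR by blast
    then have "e \<in> te ` (iE A \<inter> FR p \<tau>)" using tte by (metis imageI)
    then show "e \<in> iE A \<inter> FL p \<tau> \<inter> te ` (iE A \<inter> FR p \<tau>)" using \<open>e \<in> iE A\<close> eL by blast
  qed
qed

lemma least_uniq: "least PO x X \<Longrightarrow> least PO y X \<Longrightarrow> x = y"
proof -
  assume a: "least PO x X" "least PO y X"
  then have "x \<in> X" "y \<in> X" "X \<subseteq> pdCGs p \<tau>" "twin_le p q \<tau> x y" "twin_le p q \<tau> y x"
    unfolding least_def by auto
  then show "x = y" by (intro tl_antisym) auto
qed

lemma greatest_uniq: "greatest PO x X \<Longrightarrow> greatest PO y X \<Longrightarrow> x = y"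
proof -
  assume a: "greatest PO x X" "greatest PO y X"
  then have "x \<in> X" "y \<in> X" "X \<subseteq> pdCGs p \<tau>" "twin_le p q \<tau> x y" "twin_le p q \<tau> y x"
    unfolding greatest_def by auto
  then show "x = y" by (intro tl_antisym) auto
qed

lemma s_least: assumes A: "A \<subseteq> pdCGs p \<tau>" shows "least PO (dec (sE A) (sL A) (sEE A)) (Upper PO A)"
proof -
  let ?s = "dec (sE A) (sL A) (sEE A)"
  have v: "valid (sE A) (sL A) (sEE A)" by (rule s_valid[OF A])
  have sc: "?s \<in> pdCGs p \<tau>" by (rule dec_in[OF v])
  note d = dec_edges[OF v] dec_LL[OF v] dec_EE[OF v]
  have up: "?s \<in> Upper PO A"
    unfolding Upper_def using sc d by (auto simp: twin_le_def sE_def sL_def sEE_def)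
  have lst: "twin_le p q \<tau> ?s U" if U: "U \<in> Upper PO A" for U
  proof -
    have "\<forall>G\<in>A. twin_le p q \<tau> G U" using U A unfolding Upper_def by auto
    then show ?thesis using d by (auto simp: twin_le_def sE_def sL_def sEE_def)
  qed
  show ?thesis unfolding least_def using up lst by (auto simp: Upper_def)
qed

lemma i_greatest: assumes A: "A \<subseteq> pdCGs p \<tau>" shows "greatest PO (dec (iE A) (iL A) (iEE A)) (Lower PO A)"
proof -
  let ?s = "dec (iE A) (iL A) (iEE A)"
  have v: "valid (iE A) (iL A) (iEE A)" by (rule i_valid[OF A])
  have sc: "?s \<in> pdCGs p \<tau>" by (rule dec_in[OF v])
  note d = dec_edges[OF v] dec_LL[OF v] dec_EE[OF v]
  have lo: "?s \<in> Lower PO A"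
    unfolding Lower_def using sc d by (auto simp: twin_le_def iE_def iL_def iEE_def)
  have gst: "twin_le p q \<tau> U ?s" if U: "U \<in> Lower PO A" for U
  proof -
    have UA: "\<forall>G\<in>A. twin_le p q \<tau> U G" using U A unfolding Lower_def by auto
    have Uc: "U \<in> pdCGs p \<tau>" using U unfolding Lower_def by auto
    have vU: "valid (edges_of U) (LL_of q U) (EE_of p \<tau> U)" by (rule pd_valid[OF Uc])
    show ?thesis using d UA vU unfolding valid_def by (auto simp: twin_le_def iE_def iL_def iEE_def)
  qed
  show ?thesis unfolding greatest_def using lo gst by (auto simp: Lower_def)
qed

lemma sup_eq: "A \<subseteq> pdCGs p \<tau> \<Longrightarrow> \<Squnion>\<^bsub>PO\<^esub> A = dec (sE A) (sL A) (sEE A)"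
  unfolding sup_def by (rule some_equality) (auto intro: s_least least_uniq)

lemma inf_eq: "A \<subseteq> pdCGs p \<tau> \<Longrightarrow> \<Sqinter>\<^bsub>PO\<^esub> A = dec (iE A) (iL A) (iEE A)"
  unfolding inf_def by (rule some_equality) (auto intro: i_greatest greatest_uniq)

lemma cl: "complete_lattice PO"
proof (rule complete_lattice.intro[OF po])
  show "complete_lattice_axioms PO"
  proof
    fix A assume "A \<subseteq> carrier PO"
    then have "A \<subseteq> pdCGs p \<tau>" by simp
    then show "\<exists>s. least PO s (Upper PO A)" by (intro exI[of _ "dec (sE A) (sL A) (sEE A)"] s_least)
  next
    fix A assume "A \<subseteq> carrier PO"
    then have "A \<subseteq> pdCGs p \<tau>" by simp
    then show "\<exists>i. greatest PO i (Lower PO A)" by (intro exI[of _ "dec (iE A) (iL A) (iEE A)"] i_greatest)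
  qed
qed


lemma join_props:
  assumes G: "G \<in> pdCGs p \<tau>" and H: "H \<in> pdCGs p \<tau>"
  shows "G \<squnion>\<^bsub>PO\<^esub> H \<in> pdCGs p \<tau>"
    "edges_of (G \<squnion>\<^bsub>PO\<^esub> H) = edges_of G \<union> edges_of H"
    "LL_of q (G \<squnion>\<^bsub>PO\<^esub> H) = LL_of q G \<union> LL_of q H"
    "EE_of p \<tau> (G \<squnion>\<^bsub>PO\<^esub> H) = EE_of p \<tau> G \<union> EE_of p \<tau> H"
proof -
  have A: "{G, H} \<subseteq> pdCGs p \<tau>" using G H by simp
  have j: "G \<squnion>\<^bsub>PO\<^esub> H = dec (sE {G,H}) (sL {G,H}) (sEE {G,H})"
    unfolding join_def by (rule sup_eq[OF A])
  have v: "valid (sE {G,H}) (sL {G,H}) (sEE {G,H})" by (rule s_valid[OF A])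
  show "G \<squnion>\<^bsub>PO\<^esub> H \<in> pdCGs p \<tau>" unfolding j by (rule dec_in[OF v])
  show "edges_of (G \<squnion>\<^bsub>PO\<^esub> H) = edges_of G \<union> edges_of H" unfolding j dec_edges[OF v] by (simp add: sE_def)
  show "LL_of q (G \<squnion>\<^bsub>PO\<^esub> H) = LL_of q G \<union> LL_of q H" unfolding j dec_LL[OF v] by (simp add: sL_def)
  show "EE_of p \<tau> (G \<squnion>\<^bsub>PO\<^esub> H) = EE_of p \<tau> G \<union> EE_of p \<tau> H" unfolding j dec_EE[OF v] by (simp add: sEE_def)
qed

lemma meet_props:
  assumes G: "G \<in> pdCGs p \<tau>" and H: "H \<in> pdCGs p \<tau>"
  shows "G \<sqinter>\<^bsub>PO\<^esub> H \<in> pdCGs p \<tau>"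
    "edges_of (G \<sqinter>\<^bsub>PO\<^esub> H) = edges_of G \<inter> edges_of H"
    "LL_of q (G \<sqinter>\<^bsub>PO\<^esub> H) = LL_of q G \<inter> LL_of q H"
    "EE_of p \<tau> (G \<sqinter>\<^bsub>PO\<^esub> H) = EE_of p \<tau> G \<inter> EE_of p \<tau> H"
proof -
  have A: "{G, H} \<subseteq> pdCGs p \<tau>" using G H by simp
  have j: "G \<sqinter>\<^bsub>PO\<^esub> H = dec (iE {G,H}) (iL {G,H}) (iEE {G,H})"
    unfolding meet_def by (rule inf_eq[OF A])
  have v: "valid (iE {G,H}) (iL {G,H}) (iEE {G,H})" by (rule i_valid[OF A])
  have vG: "valid (edges_of G) (LL_of q G) (EE_of p \<tau> G)" by (rule pd_valid[OF G])
  have vH: "valid (edges_of H) (LL_of q H) (EE_of p \<tau> H)" by (rule pd_valid[OF H])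
  show "G \<sqinter>\<^bsub>PO\<^esub> H \<in> pdCGs p \<tau>" unfolding j by (rule dec_in[OF v])
  show "edges_of (G \<sqinter>\<^bsub>PO\<^esub> H) = edges_of G \<inter> edges_of H" unfolding j dec_edges[OF v]
    using vG vH by (auto simp: iE_def valid_def)
  show "LL_of q (G \<sqinter>\<^bsub>PO\<^esub> H) = LL_of q G \<inter> LL_of q H" unfolding j dec_LL[OF v]
    using vG vH by (auto simp: iL_def valid_def)
  show "EE_of p \<tau> (G \<sqinter>\<^bsub>PO\<^esub> H) = EE_of p \<tau> G \<inter> EE_of p \<tau> H" unfolding j dec_EE[OF v]
    using vG vH by (auto simp: iEE_def valid_def)
qed

lemma distrib:
  assumes G: "G \<in> pdCGs p \<tau>" and H: "H \<in> pdCGs p \<tau>" and K: "K \<in> pdCGs p \<tau>"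
  shows "G \<sqinter>\<^bsub>PO\<^esub> (H \<squnion>\<^bsub>PO\<^esub> K) = (G \<sqinter>\<^bsub>PO\<^esub> H) \<squnion>\<^bsub>PO\<^esub> (G \<sqinter>\<^bsub>PO\<^esub> K)"
proof -
  note HK = join_props[OF H K]
  note GH = meet_props[OF G H] and GK = meet_props[OF G K]
  note L = meet_props[OF G HK(1)]
  note R = join_props[OF GH(1) GK(1)]
  show ?thesis
  proof (rule enc_inj[OF L(1) R(1)])
    show "edges_of (G \<sqinter>\<^bsub>PO\<^esub> (H \<squnion>\<^bsub>PO\<^esub> K)) = edges_of ((G \<sqinter>\<^bsub>PO\<^esub> H) \<squnion>\<^bsub>PO\<^esub> (G \<sqinter>\<^bsub>PO\<^esub> K))"
      unfolding L(2) R(2) HK(2) GH(2) GK(2) by blast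
    show "LL_of q (G \<sqinter>\<^bsub>PO\<^esub> (H \<squnion>\<^bsub>PO\<^esub> K)) = LL_of q ((G \<sqinter>\<^bsub>PO\<^esub> H) \<squnion>\<^bsub>PO\<^esub> (G \<sqinter>\<^bsub>PO\<^esub> K))"
      unfolding L(3) R(3) HK(3) GH(3) GK(3) by blast
    show "EE_of p \<tau> (G \<sqinter>\<^bsub>PO\<^esub> (H \<squnion>\<^bsub>PO\<^esub> K)) = EE_of p \<tau> ((G \<sqinter>\<^bsub>PO\<^esub> H) \<squnion>\<^bsub>PO\<^esub> (G \<sqinter>\<^bsub>PO\<^esub> K))"
      unfolding L(4) R(4) HK(4) GH(4) GK(4) by blast
  qed
qed

lemma top_valid: "valid (FV p) (Lset q) (FL p \<tau>)"
  unfolding valid_def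
proof (intro conjI subset_refl)
  show "FL p \<tau> \<subseteq> FV p \<inter> FL p \<tau> \<inter> te ` (FV p \<inter> FR p \<tau>)"
  proof
    fix e assume e: "e \<in> FL p \<tau>"
    have eF: "e \<in> FV p" using e FLV by blast
    have tF: "te e \<in> FV p" and tte: "te (te e) = e" using teFV[OF eF] by simp_all
    have tR: "te e \<in> FR p \<tau>" using FLR_iff[OF eF] e by simp
    have "e \<in> te ` (FV p \<inter> FR p \<tau>)" using tF tR tte by (metis IntI imageI)
    then show "e \<in> FV p \<inter> FL p \<tau> \<inter> te ` (FV p \<inter> FR p \<tau>)" using eF e by blast
  qed
qed

lemma bot_valid: "valid {} {} {}" by (simp add: valid_def)

lemma top_eq: "\<top>\<^bsub>PO\<^esub> = dec (FV p) (Lset q) (FL p \<tau>)"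
proof -
  let ?T = "dec (FV p) (Lset q) (FL p \<tau>)"
  note v = top_valid
  have g: "greatest PO ?T (carrier PO)"
  proof -
    have "twin_le p q \<tau> G ?T" if G: "G \<in> pdCGs p \<tau>" for G
      using pd_valid[OF G] unfolding twin_le_def valid_def dec_edges[OF v] dec_LL[OF v] dec_EE[OF v] by blast
    then show ?thesis unfolding greatest_def using dec_in[OF v] by simp
  qed
  show ?thesis unfolding top_def by (rule some_equality[where P="\<lambda>x. greatest PO x (carrier PO)", OF g], rule greatest_uniq[OF _ g], assumption)
qed

lemma bot_eq: "\<bottom>\<^bsub>PO\<^esub> = dec {} {} {}"
proof -
  let ?T = "dec {} {} {}"
  note v = bot_valid
  have g: "least PO ?T (carrier PO)"
  proof -
    have "twin_le p q \<tau> ?T G" if G: "G \<in> pdCGs p \<tau>" for G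
      unfolding twin_le_def dec_edges[OF v] dec_LL[OF v] dec_EE[OF v] by blast
    then show ?thesis unfolding least_def using dec_in[OF v] by simp
  qed
  show ?thesis unfolding bottom_def by (rule some_equality[where P="\<lambda>x. least PO x (carrier PO)", OF g], rule least_uniq[OF _ g], assumption)
qed

end

theorem theorem6:
  fixes p q :: nat and \<tau> :: "nat \<Rightarrow> nat"
  assumes "twin_pairing p q \<tau>"
  shows "complete_lattice (pdcg_order p q \<tau>)
    \<and> (\<forall>G\<in>pdCGs p \<tau>. \<forall>H\<in>pdCGs p \<tau>. \<forall>K\<in>pdCGs p \<tau>.
           G \<sqinter>\<^bsub>pdcg_order p q \<tau>\<^esub> (H \<squnion>\<^bsub>pdcg_order p q \<tau>\<^esub> K)
         = (G \<sqinter>\<^bsub>pdcg_order p q \<tau>\<^esub> H) \<squnion>\<^bsub>pdcg_order p q \<tau>\<^esub> (G \<sqinter>\<^bsub>pdcg_order p q \<tau>\<^esub> K))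
    \<and> (\<forall>G\<in>pdCGs p \<tau>. \<forall>H\<in>pdCGs p \<tau>.
           edges_of (G \<sqinter>\<^bsub>pdcg_order p q \<tau>\<^esub> H) = edges_of G \<inter> edges_of H
         \<and> LL_of q (G \<sqinter>\<^bsub>pdcg_order p q \<tau>\<^esub> H) = LL_of q G \<inter> LL_of q H
         \<and> EE_of p \<tau> (G \<sqinter>\<^bsub>pdcg_order p q \<tau>\<^esub> H) = EE_of p \<tau> G \<inter> EE_of p \<tau> H)
    \<and> (\<forall>G\<in>pdCGs p \<tau>. \<forall>H\<in>pdCGs p \<tau>.
           edges_of (G \<squnion>\<^bsub>pdcg_order p q \<tau>\<^esub> H) = edges_of G \<union> edges_of H
         \<and> LL_of q (G \<squnion>\<^bsub>pdcg_order p q \<tau>\<^esub> H) = LL_of q G \<union> LL_of q H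
         \<and> EE_of p \<tau> (G \<squnion>\<^bsub>pdcg_order p q \<tau>\<^esub> H) = EE_of p \<tau> G \<union> EE_of p \<tau> H)
    \<and> (edges_of (\<top>\<^bsub>pdcg_order p q \<tau>\<^esub>) = FV p
         \<and> LL_of q (\<top>\<^bsub>pdcg_order p q \<tau>\<^esub>) = Lset q
         \<and> EE_of p \<tau> (\<top>\<^bsub>pdcg_order p q \<tau>\<^esub>) = FL p \<tau>)
    \<and> (edges_of (\<bottom>\<^bsub>pdcg_order p q \<tau>\<^esub>) = {}
         \<and> LL_of q (\<bottom>\<^bsub>pdcg_order p q \<tau>\<^esub>) = {}
         \<and> EE_of p \<tau> (\<bottom>\<^bsub>pdcg_order p q \<tau>\<^esub>) = {})"
proof -
  interpret tp p q \<tau> by (rule tp.intro[OF assms])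
  show ?thesis
    using cl distrib meet_props join_props top_eq bot_eq
      dec_edges[OF top_valid] dec_LL[OF top_valid] dec_EE[OF top_valid]
      dec_edges[OF bot_valid] dec_LL[OF bot_valid] dec_EE[OF bot_valid]
    by simp
qed


end
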